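(* Let $f_1,\dots,f_\Lambda$ be $\Lambda\ge2$ candidate models and let $\mathcal{A}$ be any deterministic pairwise comparison rule assigning to each pair $\{f,f'\}$ of distinct candidates one of them, $\mathcal{A}(f,f')\in\{f,f'\}$. Run the tournament procedure described in the context with $\mathcal{A}$. Then there are universal constants $0<c\le C$ such that the expected number of calls to $\mathcal{A}$ (expectation over the random pivot choices) lies between $c\Lambda$ and $C\Lambda$; i.e. it is $\Theta(\Lambda)$.
   Context: Tournament procedure (ATOMS): initialize $S=\{f_1,\dots,f_\Lambda\}$. While $|S|>1$: choose a pivot $f\in S$ uniformly at random (independently of the past); set $S'=\{f'\in S\setminus\{f\}:\mathcal{A}(f,f')=f'\}$ (this requires one call to $\mathcal{A}$ for each $f'\in S\setminus\{f\}$); if $S'=\emptyset$, output $f$ and stop; otherwise set $S\leftarrow S'$. If the loop ends with $|S|=1$, output the unique element of $S$. *)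

theory Defs
  imports "HOL-Probability.Probability"
begin

text \<open>Candidates f_1,...,f_Lambda are represented by their indices; the comparison rule
  is a function A on indices. One round of the tournament with current set S and pivot f
  keeps the candidates f' in S - {f} with A f f' = f'.\<close>

definition survivors :: "(nat \<Rightarrow> nat \<Rightarrow> nat) \<Rightarrow> nat set \<Rightarrow> nat \<Rightarrow> nat set" where
  "survivors A S f = {f' \<in> S - {f}. A f f' = f'}"

function tournament_calls :: "(nat \<Rightarrow> nat \<Rightarrow> nat) \<Rightarrow> nat set \<Rightarrow> nat pmf" where
  "tournament_calls A S =
     (if \<not> finite S \<or> card S \<le> 1 then return_pmf 0
      else pmf_of_set S \<bind> (\<lambda>f.
        if survivors A S f = {} then return_pmf (card S - 1)
        else map_pmf (\<lambda>k. (card S - 1) + k) (tournament_calls A (survivors A S f))))"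
  by auto
termination
proof (relation "Wellfounded.measure (\<lambda>(A, S). card S)")
  show "wf (Wellfounded.measure (\<lambda>(A, S). card S))" by simp
next
  fix A :: "nat \<Rightarrow> nat \<Rightarrow> nat" and S :: "nat set" and f
  assume h: "\<not> (\<not> finite S \<or> card S \<le> 1)" "f \<in> set_pmf (pmf_of_set S)"
  then have "finite S" "S \<noteq> {}" by auto
  with h have "f \<in> S" by simp
  have "survivors A S f \<subset> S" using \<open>f \<in> S\<close> unfolding survivors_def by auto
  then show "((A, survivors A S f), A, S) \<in> Wellfounded.measure (\<lambda>(A, S). card S)"
    using \<open>finite S\<close> by (simp add: psubset_card_mono)
qed

definition expected_calls :: "(nat \<Rightarrow> nat \<Rightarrow> nat) \<Rightarrow> nat \<Rightarrow> real" where
  "expected_calls A \<Lambda> = measure_pmf.expectation (tournament_calls A {0..<\<Lambda>}) real"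

end

theory Submission
  imports Defs
begin

declare tournament_calls.simps[simp del]

lemma tc_finite: "finite (set_pmf (tournament_calls A S))"
proof (induction A S rule: tournament_calls.induct)
  case (1 A S)
  show ?case
  proof (cases "\<not> finite S \<or> card S \<le> 1")
    case True
    then show ?thesis by (subst tournament_calls.simps) simp
  next
    case False
    then have "S \<noteq> {}" "finite S" by auto
    then show ?thesis using False 1
      by (subst tournament_calls.simps) (auto simp: set_bind_pmf)
  qed
qed

abbreviation E where "E A S \<equiv> measure_pmf.expectation (tournament_calls A S) real"

lemma E_step:
  assumes "finite S" "\<not> card S \<le> 1"
  shows "E A S = (\<Sum>f\<in>S. (if survivors A S f = {} then real (card S - 1)
              else real (card S - 1) + E A (survivors A S f)) / real (card S))"
proof -
  have ne: "S \<noteq> {}" using assms by auto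
  have "E A S = measure_pmf.expectation (pmf_of_set S \<bind> (\<lambda>f.
        if survivors A S f = {} then return_pmf (card S - 1)
        else map_pmf (\<lambda>k. (card S - 1) + k) (tournament_calls A (survivors A S f)))) real"
    using assms by (subst tournament_calls.simps) simp
  also have "\<dots> = (\<Sum>f\<in>S. measure_pmf.expectation (if survivors A S f = {} then return_pmf (card S - 1)
        else map_pmf (\<lambda>k. (card S - 1) + k) (tournament_calls A (survivors A S f))) real /\<^sub>R real (card S))"
    by (rule pmf_expectation_bind_pmf_of_set) (use ne assms tc_finite in auto)
  also have "\<dots> = (\<Sum>f\<in>S. (if survivors A S f = {} then real (card S - 1)
              else real (card S - 1) + E A (survivors A S f)) / real (card S))"
  proof (rule sum.cong[OF refl])
    fix f assume "f \<in> S"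
    have int: "integrable (measure_pmf (tournament_calls A (survivors A S f))) real"
      by (rule integrable_measure_pmf_finite[OF tc_finite])
    have "measure_pmf.expectation (map_pmf (\<lambda>k. (card S - 1) + k) (tournament_calls A (survivors A S f))) real
       = real (card S - 1) + E A (survivors A S f)"
      using int by (simp add: Bochner_Integration.integral_add)
    then show "measure_pmf.expectation (if survivors A S f = {} then return_pmf (card S - 1)
        else map_pmf (\<lambda>k. (card S - 1) + k) (tournament_calls A (survivors A S f))) real /\<^sub>R real (card S)
      = (if survivors A S f = {} then real (card S - 1)
              else real (card S - 1) + E A (survivors A S f)) / real (card S)"
      by (simp add: divide_inverse_commute)
  qed
  finally show ?thesis .
qed

lemma surv_sum:
  assumes fin: "finite S"
    and tourn: "\<forall>i\<in>S. \<forall>j\<in>S. i \<noteq> j \<longrightarrow> A i j \<in> {i, j} \<and> A i j = A j i"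
  shows "2 * (\<Sum>f\<in>S. card (survivors A S f)) \<le> card S * card S"
proof -
  define P where "P = Sigma S (survivors A S)"
  have sub: "\<And>f. survivors A S f \<subseteq> S" unfolding survivors_def by auto
  have finB: "\<And>f. finite (survivors A S f)" using fin sub finite_subset by blast
  have cP: "card P = (\<Sum>f\<in>S. card (survivors A S f))"
    unfolding P_def using fin finB by (simp add: card_SigmaI)
  define Q where "Q = (\<lambda>(x,y). (y,x)) ` P"
  have injs: "inj_on (\<lambda>(x::nat,y::nat). (y,x)) P" by (auto simp: inj_on_def)
  have cQ: "card Q = card P" unfolding Q_def using injs by (rule card_image)
  have PS: "P \<subseteq> S \<times> S" unfolding P_def using sub by auto
  have QS: "Q \<subseteq> S \<times> S" unfolding Q_def using PS by auto
  have disj: "P \<inter> Q = {}"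
  proof (rule ccontr)
    assume "P \<inter> Q \<noteq> {}"
    then obtain x y where "(x,y) \<in> P" "(y,x) \<in> P" unfolding Q_def by auto
    then have "x \<in> S" "y \<in> S" "x \<noteq> y" "A x y = y" "A y x = x"
      unfolding P_def survivors_def by auto
    with tourn show False by metis
  qed
  have finSS: "finite (S \<times> S)" using fin by simp
  have "card P + card Q = card (P \<union> Q)"
    using disj finite_subset[OF PS finSS] finite_subset[OF QS finSS] by (simp add: card_Un_disjoint)
  also have "\<dots> \<le> card (S \<times> S)" using PS QS finSS by (intro card_mono) auto
  finally show ?thesis using cP cQ by (simp add: card_cartesian_product)
qed



lemma E_upper:
  "finite S \<Longrightarrow> (\<forall>i\<in>S. \<forall>j\<in>S. i \<noteq> j \<longrightarrow> A i j \<in> {i, j} \<and> A i j = A j i)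
   \<Longrightarrow> E A S \<le> 2 * real (card S)"
proof (induction A S rule: tournament_calls.induct)
  case (1 A S)
  show ?case
  proof (cases "card S \<le> 1")
    case True
    then show ?thesis by (subst tournament_calls.simps) simp
  next
    case False
    let ?n = "card S"
    have n0: "real ?n > 0" using False by simp
    have sub: "\<And>f. survivors A S f \<subseteq> S" unfolding survivors_def by auto
    have bnd: "(if survivors A S f = {} then real (?n - 1)
              else real (?n - 1) + E A (survivors A S f)) \<le> real (?n - 1) + 2 * real (card (survivors A S f))"
      if "f \<in> S" for f
    proof (cases "survivors A S f = {}")
      case True then show ?thesis by simp
    next
      case ne: False
      have "E A (survivors A S f) \<le> 2 * real (card (survivors A S f))"
      proof (rule "1.IH"[of f])
        show "\<not> (\<not> finite S \<or> card S \<le> 1)" using "1.prems"(1) False by simp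
        show "f \<in> set_pmf (pmf_of_set S)" using "1.prems"(1) False that by (subst set_pmf_of_set) auto
        show "survivors A S f \<noteq> {}" by (rule ne)
        show "finite (survivors A S f)" using finite_subset[OF sub "1.prems"(1)] .
        show "\<forall>i\<in>survivors A S f. \<forall>j\<in>survivors A S f. i \<noteq> j \<longrightarrow> A i j \<in> {i, j} \<and> A i j = A j i"
          using "1.prems"(2) sub by blast
      qed
      then show ?thesis using ne by simp
    qed
    have "E A S = (\<Sum>f\<in>S. (if survivors A S f = {} then real (?n - 1)
              else real (?n - 1) + E A (survivors A S f)) / real ?n)"
      using E_step[OF "1.prems"(1) False] .
    also have "\<dots> \<le> (\<Sum>f\<in>S. (real (?n - 1) + 2 * real (card (survivors A S f))) / real ?n)"
      by (intro sum_mono divide_right_mono bnd) (use n0 in simp_all)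
    also have "\<dots> = (real ?n * real (?n - 1) + 2 * real (\<Sum>f\<in>S. card (survivors A S f))) / real ?n"
      by (simp add: sum_divide_distrib[symmetric] sum.distrib sum_distrib_left)
    also have "\<dots> \<le> (real ?n * real (?n - 1) + real ?n * real ?n) / real ?n"
    proof -
      have "2 * (\<Sum>f\<in>S. card (survivors A S f)) \<le> ?n * ?n"
        using surv_sum "1.prems" by blast
      then have "2 * real (\<Sum>f\<in>S. card (survivors A S f)) \<le> real ?n * real ?n"
        by (metis of_nat_le_iff of_nat_mult of_nat_numeral)
      then show ?thesis using n0 by (intro divide_right_mono) auto
    qed
    also have "\<dots> = real (?n - 1) + real ?n" using n0 by (simp add: field_simps)
    also have "\<dots> \<le> 2 * real ?n" by simp
    finally show ?thesis .
  qed
qed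

lemma E_lower:
  assumes "finite S" "\<not> card S \<le> 1"
  shows "real (card S - 1) \<le> E A S"
proof -
  let ?n = "card S"
  have n0: "real ?n > 0" using assms by simp
  have "(\<Sum>f\<in>S. real (?n - 1) / real ?n) \<le> (\<Sum>f\<in>S. (if survivors A S f = {} then real (?n - 1)
              else real (?n - 1) + E A (survivors A S f)) / real ?n)"
    by (intro sum_mono divide_right_mono) (use n0 in simp_all)
  also have "\<dots> = E A S" using E_step[OF assms] by simp
  finally show ?thesis using n0 by simp
qed

theorem mainTheorem2:
  "\<exists>c C :: real. 0 < c \<and> c \<le> C \<and>
     (\<forall>(\<Lambda>::nat) (A :: nat \<Rightarrow> nat \<Rightarrow> nat).
        \<Lambda> \<ge> 2 \<longrightarrow>
        (\<forall>i\<in>{0..<\<Lambda>}. \<forall>j\<in>{0..<\<Lambda>}. i \<noteq> j \<longrightarrow> A i j \<in> {i, j} \<and> A i j = A j i) \<longrightarrow>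
        c * real \<Lambda> \<le> expected_calls A \<Lambda> \<and> expected_calls A \<Lambda> \<le> C * real \<Lambda>)"
proof (rule exI[of _ "1/2"], rule exI[of _ 2], intro conjI allI impI)
  fix L :: nat and A :: "nat \<Rightarrow> nat \<Rightarrow> nat"
  assume L: "L \<ge> 2"
    and T: "\<forall>i\<in>{0..<L}. \<forall>j\<in>{0..<L}. i \<noteq> j \<longrightarrow> A i j \<in> {i, j} \<and> A i j = A j i"
  have "real (card {0..<L} - 1) \<le> E A {0..<L}" by (rule E_lower) (use L in auto)
  then show "1/2 * real L \<le> expected_calls A L" using L
    unfolding expected_calls_def by simp
  show "expected_calls A L \<le> 2 * real L"
    using E_upper[of "{0..<L}" A] T unfolding expected_calls_def by simp
qed simp_all

end
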